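(* Let $N\ge3$, $K(r)\equiv r^{\alpha}$ with $\alpha>-2$, and $p>p_S(\alpha)$. Assume $f$ satisfies (F0) and (F$\infty$). Then there exists $\mu_1>0$ such that for every $\mu\in[0,\mu_1)$, $(E_\mu)$ has a singular slow-decay solution.
   Context: $f:(0,\infty)\to[0,\infty)$ is continuous, not identically zero, and satisfies (F0): $f(r)=O(r^{\nu})$ as $r\to0$ for some $\nu>-2$; (F$\infty$): $f(r)=O(r^{-q})$ as $r\to\infty$ for some $q>N$. For $\mu\ge0$, $(E_\mu)$ is $u''+\frac{N-1}{r}u'+K(r)u^p+\mu f(r)=0$, $u>0$ for $r>0$. A singular solution is $u\in C^2(0,\infty)$ satisfying $(E_\mu)$ pointwise on $(0,\infty)$ with $\lim_{r\to0}u(r)=\infty$. It is slow-decay if $\limsup_{r\to\infty}r^{N-2}u(r)=\infty$. $p_S(\alpha):=\frac{N+2+2\alpha}{N-2}$. *)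

theory Defs
  imports "HOL-Analysis.Analysis" "HOL-Library.Landau_Symbols"
begin

definition p_S :: "nat \<Rightarrow> real \<Rightarrow> real" where
  "p_S N \<alpha> = (real N + 2 + 2 * \<alpha>) / (real N - 2)"

definition admissible_f :: "nat \<Rightarrow> (real \<Rightarrow> real) \<Rightarrow> bool" where
  "admissible_f N f \<longleftrightarrow>
     continuous_on {0<..} f \<and> (\<forall>r>0. f r \<ge> 0) \<and> (\<exists>r>0. f r \<noteq> 0) \<and>
     (\<exists>\<nu>>-2. f \<in> O[at_right 0](\<lambda>r. r powr \<nu>)) \<and>
     (\<exists>q>real N. f \<in> O[at_top](\<lambda>r. r powr (- q)))"

definition singular_solution ::
  "nat \<Rightarrow> real \<Rightarrow> real \<Rightarrow> real \<Rightarrow> (real \<Rightarrow> real) \<Rightarrow> (real \<Rightarrow> real) \<Rightarrow> bool" where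
  "singular_solution N \<alpha> p \<mu> f u \<longleftrightarrow>
     (\<exists>u' u''.
        (\<forall>r>0. (u has_real_derivative u' r) (at r) \<and> (u' has_real_derivative u'' r) (at r)) \<and>
        continuous_on {0<..} u'' \<and>
        (\<forall>r>0. u r > 0 \<and>
           u'' r + (real N - 1) / r * u' r + r powr \<alpha> * (u r) powr p + \<mu> * f r = 0)) \<and>
     filterlim u at_top (at_right 0)"

definition slow_decay :: "nat \<Rightarrow> (real \<Rightarrow> real) \<Rightarrow> bool" where
  "slow_decay N u \<longleftrightarrow> Limsup at_top (\<lambda>r. ereal (r ^ (N - 2) * u r)) = \<infinity>"

end

theory Submission
  imports Defs
begin

lemma exp_int_left:
  fixes a t :: real assumes "a > 0"
  shows "(\<lambda>x. exp (a * x)) absolutely_integrable_on {..t} \<and> integral {..t} (\<lambda>x. exp (a * x)) = exp (a * t)/a"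
proof -
  have h: "((\<lambda>x::real. exp (-a*x)) has_integral exp (-a*(-t))/a) {-t..}"
    by (rule has_integral_exp_minus_to_infinity[OF assms])
  have ai: "(\<lambda>x::real. exp (-a*x)) absolutely_integrable_on {-t..}"
    using h by (intro nonnegative_absolutely_integrable_1) auto
  have "(\<lambda>x. (\<lambda>x::real. exp (-a*x)) (-x)) absolutely_integrable_on {..t} \<and> integral {..t} (\<lambda>x. (\<lambda>x::real. exp (-a*x)) (-x)) = exp (-a*(-t))/a"
    apply (subst has_absolute_integral_reflect_real[where B="{-t..}"])
    using ai h by (auto simp: image_def integral_unique intro: exI[where x="- _"])
  then show ?thesis by simp
qed



definition Gop :: "complex \<Rightarrow> (real \<Rightarrow> complex) \<Rightarrow> real \<Rightarrow> complex" where
  "Gop l h t = exp (l * of_real t) * integral {..t} (\<lambda>s. exp (- (l * of_real s)) * h s)"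

lemma norm_exp_lt: "norm (exp (l * complex_of_real s)) = exp (Re l * s)"
  by (simp add: norm_exp_eq_Re)

lemma Gop_integrable:
  assumes l: "Re l < 0" and h: "continuous_on UNIV h" and B: "\<And>s. norm (h s) \<le> B"
  shows "(\<lambda>s. exp (- (l * of_real s)) * h s) absolutely_integrable_on {..t}"
    and "norm (integral {..t} (\<lambda>s. exp (- (l * of_real s)) * h s)) \<le> B * (exp (- Re l * t) / (- Re l))"
proof -
  define a where "a = - Re l"
  have a: "a > 0" using l by (simp add: a_def)
  have E: "(\<lambda>x. exp (a * x)) absolutely_integrable_on {..t}" "integral {..t} (\<lambda>x. exp (a * x)) = exp (a * t)/a"
    using exp_int_left[OF a] by auto
  have nb: "norm (exp (- (l * of_real s)) * h s) \<le> B * exp (a * s)" for s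
  proof -
    have "norm (exp (- (l * of_real s)) * h s) = exp (a * s) * norm (h s)"
      by (simp add: norm_mult norm_exp_eq_Re a_def)
    also have "\<dots> \<le> exp (a * s) * B" using B by (intro mult_left_mono) auto
    finally show ?thesis by (simp add: mult.commute)
  qed
  have cont: "continuous_on {..t} (\<lambda>s. exp (- (l * of_real s)) * h s)"
    by (intro continuous_intros continuous_on_subset[OF h]) auto
  have gi: "(\<lambda>x. B * exp (a * x)) integrable_on {..t}"
    using integrable_on_mult_right[OF set_lebesgue_integral_eq_integral(1)[OF E(1)]] by simp
  show ai: "(\<lambda>s. exp (- (l * of_real s)) * h s) absolutely_integrable_on {..t}"
    apply (rule measurable_bounded_by_integrable_imp_absolutely_integrable[OF _ _ gi])
    using cont nb by (auto intro!: continuous_imp_measurable_on_sets_lebesgue)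
  have "norm (integral {..t} (\<lambda>s. exp (- (l * of_real s)) * h s)) \<le> integral {..t} (\<lambda>x. B * exp (a * x))"
    using ai gi nb by (intro integral_norm_bound_integral) (auto simp: absolutely_integrable_on_def)
  also have "\<dots> = B * (exp (a * t)/a)" using E(2) by simp
  finally show "norm (integral {..t} (\<lambda>s. exp (- (l * of_real s)) * h s)) \<le> B * (exp (- Re l * t) / (- Re l))"
    by (simp add: a_def)
qed

lemma Gop_bound:
  assumes l: "Re l < 0" and h: "continuous_on UNIV h" and B: "\<And>s. norm (h s) \<le> B"
  shows "norm (Gop l h t) \<le> B / (- Re l)"
proof -
  have "norm (Gop l h t) \<le> exp (Re l * t) * (B * (exp (- Re l * t) / (- Re l)))"
    unfolding Gop_def norm_mult norm_exp_lt
    by (intro mult_left_mono Gop_integrable[OF assms]) auto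
  also have "\<dots> = (exp (Re l * t) * exp (- Re l * t)) * (B / (- Re l))"
    by (simp add: algebra_simps)
  also have "exp (Re l * t) * exp (- Re l * t) = 1"
    by (simp add: exp_minus)
  finally have "norm (Gop l h t) \<le> 1 * (B / (- Re l))" .
  then show ?thesis by simp
qed

lemma Gop_deriv:
  assumes l: "Re l < 0" and h: "continuous_on UNIV h" and B: "\<And>s. norm (h s) \<le> B"
  shows "(Gop l h has_vector_derivative (l * Gop l h t + h t)) (at t)"
proof -
  define \<phi> where "\<phi> = (\<lambda>s. exp (- (l * of_real s)) * h s)"
  define H where "H = (\<lambda>x. integral {..x} \<phi>)"
  have cont: "continuous_on S \<phi>" for S
    unfolding \<phi>_def by (intro continuous_intros continuous_on_subset[OF h]) auto
  have ii: "\<phi> integrable_on {..x}" for x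
    using Gop_integrable(1)[OF assms] by (simp add: \<phi>_def absolutely_integrable_on_def)
  have split: "H x = H (t-1) + integral {t-1..x} \<phi>" if "x \<in> {t-1<..<t+1}" for x
  proof -
    have "(\<phi> has_integral (H (t-1) + integral {t-1..x} \<phi>)) ({..t-1} \<union> {t-1..x})"
      apply (rule has_integral_Un)
      using ii integrable_continuous_real[OF cont] unfolding H_def
      by (auto intro: integrable_integral negligible_subset[of "{t-1}"])
    moreover have "{..t-1} \<union> {t-1..x} = {..x}" using that by auto
    ultimately show ?thesis unfolding H_def by (simp add: integral_unique)
  qed
  have d1: "((\<lambda>u. integral {t-1..u} \<phi>) has_vector_derivative \<phi> t) (at t within {t-1..t+1})"
    by (rule integral_has_vector_derivative[OF cont]) auto
  have "interior {t-1..t+1} = {t-1<..<t+1}" by simp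
  then have ti: "t \<in> interior {t-1..t+1}" by simp
  have d1': "((\<lambda>u. integral {t-1..u} \<phi>) has_vector_derivative \<phi> t) (at t)"
    using d1 unfolding at_within_interior[OF ti] .
  have d2: "((\<lambda>u. H (t-1) + integral {t-1..u} \<phi>) has_vector_derivative \<phi> t) (at t)"
    using has_vector_derivative_add[OF has_vector_derivative_const d1'] by simp
  have dH: "(H has_vector_derivative \<phi> t) (at t)"
    by (rule has_vector_derivative_transform_within_open[OF d2, of "{t-1<..<t+1}"]) (simp_all add: split)
  have dE: "((\<lambda>x. exp (l * of_real x)) has_vector_derivative (l * exp (l * of_real t))) (at t)"
  proof -
    have "((\<lambda>z. exp (l * z)) has_field_derivative (l * exp (l * of_real t))) (at (of_real t))"
      by (auto intro!: derivative_eq_intros)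
    from has_vector_derivative_real_field[OF this] show ?thesis by simp
  qed
  have eq: "Gop l h = (\<lambda>x. exp (l * of_real x) * H x)"
    by (auto simp: Gop_def H_def \<phi>_def fun_eq_iff)
  have "((\<lambda>x. exp (l * of_real x) * H x) has_vector_derivative
      (exp (l * of_real t) * \<phi> t + (l * exp (l * of_real t)) * H t)) (at t)"
    by (rule has_vector_derivative_mult[OF dE dH])
  moreover have "exp (l * of_real t) * \<phi> t + (l * exp (l * of_real t)) * H t = l * Gop l h t + h t"
  proof -
    have e2: "exp (l * of_real t) * exp (-(l * of_real t)) = 1" by (simp add: exp_minus)
    have "exp (l * of_real t) * \<phi> t = h t"
      unfolding \<phi>_def by (simp add: mult.assoc[symmetric] e2)
    then show ?thesis by (simp add: eq algebra_simps)
  qed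
  ultimately show ?thesis by (simp add: eq)
qed



lemma Gop_diff:
  assumes l: "Re l < 0" and h1: "continuous_on UNIV h1" "\<And>s. norm (h1 s) \<le> B1"
    and h2: "continuous_on UNIV h2" "\<And>s. norm (h2 s) \<le> B2"
  shows "Gop l h1 t - Gop l h2 t = Gop l (\<lambda>s. h1 s - h2 s) t"
proof -
  have i1: "(\<lambda>s. exp (- (l * of_real s)) * h1 s) integrable_on {..t}"
    using Gop_integrable(1)[OF l h1] set_lebesgue_integral_eq_integral(1) by blast
  have i2: "(\<lambda>s. exp (- (l * of_real s)) * h2 s) integrable_on {..t}"
    using Gop_integrable(1)[OF l h2] set_lebesgue_integral_eq_integral(1) by blast
  have "integral {..t} (\<lambda>s. exp (- (l * of_real s)) * (h1 s - h2 s)) =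
     integral {..t} (\<lambda>s. exp (- (l * of_real s)) * h1 s) - integral {..t} (\<lambda>s. exp (- (l * of_real s)) * h2 s)"
    by (simp add: right_diff_distrib integral_diff[OF i1 i2])
  then show ?thesis unfolding Gop_def by (simp add: right_diff_distrib)
qed

lemma Gop_cont:
  assumes l: "Re l < 0" and h: "continuous_on UNIV h" and B: "\<And>s. norm (h s) \<le> B"
  shows "continuous_on UNIV (Gop l h)"
  using Gop_deriv[OF assms]
  by (intro continuous_on_vector_derivative) (auto intro: has_vector_derivative_at_within)

definition Sop :: "complex \<Rightarrow> complex \<Rightarrow> (real \<Rightarrow> real) \<Rightarrow> real \<Rightarrow> real" where
  "Sop l1 l2 h t = Re (Gop l2 (Gop l1 (\<lambda>s. of_real (h s))) t)"

lemma Re_deriv: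
  assumes "(f has_vector_derivative f') (at t)"
  shows "((\<lambda>x. Re (f x)) has_real_derivative Re f') (at t)"
  using bounded_linear.has_vector_derivative[OF bounded_linear_Re assms]
  by (simp add: has_real_derivative_iff_has_vector_derivative)

lemma Sop_props:
  assumes l1: "Re l1 < 0" and l2: "Re l2 < 0"
    and c: "l1 + l2 = - of_real c" and g: "l1 * l2 = of_real \<gamma>"
    and h: "continuous_on UNIV h" and B: "\<And>s. \<bar>h s\<bar> \<le> B"
  shows "\<And>t. \<bar>Sop l1 l2 h t\<bar> \<le> B / (Re l1 * Re l2)"
    and "\<exists>w1 w2. continuous_on UNIV w1 \<and> continuous_on UNIV w2 \<and>
          (\<forall>t. (Sop l1 l2 h has_real_derivative w1 t) (at t) \<and> (w1 has_real_derivative w2 t) (at t)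
              \<and> w2 t + c * w1 t + \<gamma> * Sop l1 l2 h t = h t)"
proof -
  define hc where "hc = (\<lambda>s. complex_of_real (h s))"
  have hc: "continuous_on UNIV hc" "\<And>s. norm (hc s) \<le> B"
    using h B by (auto simp: hc_def intro!: continuous_intros)
  define z1 where "z1 = Gop l1 hc"
  have z1b: "norm (z1 s) \<le> B / (- Re l1)" for s
    unfolding z1_def by (rule Gop_bound[OF l1 hc])
  have z1c: "continuous_on UNIV z1" unfolding z1_def by (rule Gop_cont[OF l1 hc])
  have z1d: "(z1 has_vector_derivative (l1 * z1 t + hc t)) (at t)" for t
    unfolding z1_def by (rule Gop_deriv[OF l1 hc])
  define z2 where "z2 = Gop l2 z1"
  have z2b: "norm (z2 s) \<le> (B / (- Re l1)) / (- Re l2)" for s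
    unfolding z2_def by (rule Gop_bound[OF l2 z1c z1b])
  have z2c: "continuous_on UNIV z2" unfolding z2_def by (rule Gop_cont[OF l2 z1c z1b])
  have z2d: "(z2 has_vector_derivative (l2 * z2 t + z1 t)) (at t)" for t
    unfolding z2_def by (rule Gop_deriv[OF l2 z1c z1b])
  have S: "Sop l1 l2 h = (\<lambda>t. Re (z2 t))"
    by (simp add: Sop_def z2_def z1_def hc_def fun_eq_iff)
  show "\<bar>Sop l1 l2 h t\<bar> \<le> B / (Re l1 * Re l2)" for t
  proof -
    have "\<bar>Sop l1 l2 h t\<bar> \<le> norm (z2 t)" unfolding S by (simp add: abs_Re_le_cmod)
    also have "\<dots> \<le> (B / (- Re l1)) / (- Re l2)" by (rule z2b)
    also have "\<dots> = B / (Re l1 * Re l2)" by (simp add: field_simps)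
    finally show ?thesis .
  qed
  define w1 where "w1 = (\<lambda>t. Re (l2 * z2 t + z1 t))"
  define w2 where "w2 = (\<lambda>t. Re (l2 * (l2 * z2 t + z1 t) + (l1 * z1 t + hc t)))"
  have d1: "(Sop l1 l2 h has_real_derivative w1 t) (at t)" for t
    unfolding S w1_def by (rule Re_deriv[OF z2d])
  have d2: "(w1 has_real_derivative w2 t) (at t)" for t
    unfolding w1_def w2_def
    by (rule Re_deriv) (intro derivative_intros z1d z2d)
  have c1: "continuous_on UNIV w1" unfolding w1_def
    by (intro continuous_intros z1c z2c)
  have c2: "continuous_on UNIV w2" unfolding w2_def
    by (intro continuous_intros z1c z2c hc)
  have eq: "w2 t + c * w1 t + \<gamma> * Sop l1 l2 h t = h t" for t
  proof -
    have "complex_of_real (w2 t + c * w1 t + \<gamma> * Sop l1 l2 h t) =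
       of_real (Re (l2 * (l2 * z2 t + z1 t) + (l1 * z1 t + hc t) + of_real c * (l2 * z2 t + z1 t) + of_real \<gamma> * z2 t))"
      by (simp add: w1_def w2_def S)
    also have "l2 * (l2 * z2 t + z1 t) + (l1 * z1 t + hc t) + of_real c * (l2 * z2 t + z1 t) + of_real \<gamma> * z2 t
       = hc t + (l1 + l2 + of_real c) * z1 t + (l2 * l2 + of_real c * l2 + of_real \<gamma>) * z2 t"
      by (simp add: algebra_simps)
    also have "l1 + l2 + of_real c = 0" using c by simp
    also have "l2 * l2 + of_real c * l2 + of_real \<gamma> = 0"
    proof -
      have "of_real c = - (l1 + l2)" using c by simp
      then have "l2 * l2 + of_real c * l2 + of_real \<gamma> = l2 * l2 + (- (l1 + l2)) * l2 + l1 * l2"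
        by (simp only: g[symmetric])
      also have "\<dots> = 0" by (simp add: algebra_simps)
      finally show ?thesis .
    qed
    finally have X: "complex_of_real (w2 t + c * w1 t + \<gamma> * Sop l1 l2 h t) = complex_of_real (h t)"
      by (simp add: hc_def)
    then show ?thesis using of_real_eq_iff by blast
  qed
  show "\<exists>w1 w2. continuous_on UNIV w1 \<and> continuous_on UNIV w2 \<and>
          (\<forall>t. (Sop l1 l2 h has_real_derivative w1 t) (at t) \<and> (w1 has_real_derivative w2 t) (at t)
              \<and> w2 t + c * w1 t + \<gamma> * Sop l1 l2 h t = h t)"
    using c1 c2 d1 d2 eq by blast
qed



lemma Sop_diff:
  assumes l1: "Re l1 < 0" and l2: "Re l2 < 0"
    and h1: "continuous_on UNIV h1" "\<And>s. \<bar>h1 s\<bar> \<le> B1"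
    and h2: "continuous_on UNIV h2" "\<And>s. \<bar>h2 s\<bar> \<le> B2"
  shows "Sop l1 l2 h1 t - Sop l1 l2 h2 t = Sop l1 l2 (\<lambda>s. h1 s - h2 s) t"
proof -
  define k1 where "k1 = (\<lambda>s. complex_of_real (h1 s))"
  define k2 where "k2 = (\<lambda>s. complex_of_real (h2 s))"
  have k1: "continuous_on UNIV k1" "\<And>s. norm (k1 s) \<le> B1"
    using h1 by (auto simp: k1_def intro!: continuous_intros)
  have k2: "continuous_on UNIV k2" "\<And>s. norm (k2 s) \<le> B2"
    using h2 by (auto simp: k2_def intro!: continuous_intros)
  have e1: "Gop l1 k1 s - Gop l1 k2 s = Gop l1 (\<lambda>s. k1 s - k2 s) s" for s
    by (rule Gop_diff[OF l1 k1 k2])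
  have "Gop l2 (Gop l1 k1) t - Gop l2 (Gop l1 k2) t = Gop l2 (\<lambda>s. Gop l1 k1 s - Gop l1 k2 s) t"
    by (rule Gop_diff[OF l2 Gop_cont[OF l1 k1] Gop_bound[OF l1 k1] Gop_cont[OF l1 k2] Gop_bound[OF l1 k2]])
  also have "(\<lambda>s. Gop l1 k1 s - Gop l1 k2 s) = Gop l1 (\<lambda>s. k1 s - k2 s)"
    using e1 by auto
  finally have X: "Gop l2 (Gop l1 k1) t - Gop l2 (Gop l1 k2) t = Gop l2 (Gop l1 (\<lambda>s. k1 s - k2 s)) t" .
  have Y: "(\<lambda>s. k1 s - k2 s) = (\<lambda>s. complex_of_real (h1 s - h2 s))" by (simp add: k1_def k2_def)
  have "Sop l1 l2 h1 t - Sop l1 l2 h2 t = Re (Gop l2 (Gop l1 k1) t - Gop l2 (Gop l1 k2) t)"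
    by (simp add: Sop_def k1_def k2_def)
  also have "\<dots> = Sop l1 l2 (\<lambda>s. h1 s - h2 s) t" unfolding X Y Sop_def ..
  finally show ?thesis .
qed

lemma fixpoint:
  fixes g R :: "real \<Rightarrow> real"
  assumes l1: "Re l1 < 0" and l2: "Re l2 < 0"
    and c: "l1 + l2 = - of_real c" and gm: "l1 * l2 = of_real \<gamma>"
    and g: "continuous_on UNIV g" "\<And>s. \<bar>g s\<bar> \<le> Gb"
    and eps: "\<epsilon> > 0"
    and Rc: "continuous_on {-\<epsilon>..\<epsilon>} R" and R0: "R 0 = 0"
    and RL: "\<And>x y. \<bar>x\<bar> \<le> \<epsilon> \<Longrightarrow> \<bar>y\<bar> \<le> \<epsilon> \<Longrightarrow> \<bar>R x - R y\<bar> \<le> L * \<bar>x - y\<bar>"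
    and L: "L \<ge> 0" "L / (Re l1 * Re l2) \<le> 1/2"
    and mu: "\<mu> \<ge> 0" "\<mu> * Gb / (Re l1 * Re l2) \<le> \<epsilon> / 2"
  shows "\<exists>w. continuous_on UNIV w \<and> (\<forall>t. \<bar>w t\<bar> \<le> \<epsilon>) \<and>
           (\<forall>t. w t = Sop l1 l2 (\<lambda>s. - \<mu> * g s - R (w s)) t)"
proof -
  define M where "M = 1 / (Re l1 * Re l2)"
  have M: "M > 0" using l1 l2 by (simp add: M_def mult_neg_neg)
  have LM: "L * M \<le> 1/2" using L by (simp add: M_def)
  have muM: "\<mu> * Gb * M \<le> \<epsilon> / 2" using mu by (simp add: M_def)
  define S where "S = cball (0::real \<Rightarrow>\<^sub>C real) \<epsilon>"
  have wS: "\<bar>apply_bcontfun w t\<bar> \<le> \<epsilon>" if "w \<in> S" for w t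
  proof -
    have "norm (apply_bcontfun w t) \<le> norm w" by (rule norm_bounded)
    also have "norm w \<le> \<epsilon>" using that by (simp add: S_def dist_norm)
    finally show ?thesis by simp
  qed
  define hw where "hw = (\<lambda>(w::real \<Rightarrow>\<^sub>C real) s. - \<mu> * g s - R (apply_bcontfun w s))"
  have hwc: "continuous_on UNIV (hw w)" if "w \<in> S" for w
  proof -
    have "continuous_on UNIV (\<lambda>s. R (apply_bcontfun w s))"
    proof (rule continuous_on_compose2[OF Rc])
      show "(\<lambda>s. apply_bcontfun w s) ` UNIV \<subseteq> {-\<epsilon>..\<epsilon>}"
      proof
        fix y assume "y \<in> (\<lambda>s. apply_bcontfun w s) ` UNIV"
        then obtain s where "y = apply_bcontfun w s" by auto
        with wS[OF that, of s] show "y \<in> {-\<epsilon>..\<epsilon>}" by (simp add: abs_le_iff)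
      qed
    qed auto
    then show ?thesis unfolding hw_def using g(1) by (auto intro!: continuous_intros)
  qed
  have Rb: "\<bar>R x\<bar> \<le> L * \<epsilon>" if "\<bar>x\<bar> \<le> \<epsilon>" for x
  proof -
    have "\<bar>R x - R 0\<bar> \<le> L * \<bar>x - 0\<bar>" using RL[OF that, of 0] eps by simp
    also have "\<dots> \<le> L * \<epsilon>" using that L by (intro mult_left_mono) auto
    finally show ?thesis using R0 by simp
  qed
  have hwb: "\<bar>hw w s\<bar> \<le> \<mu> * Gb + L * \<epsilon>" if "w \<in> S" for w s
  proof -
    have "\<bar>hw w s\<bar> \<le> \<bar>\<mu> * g s\<bar> + \<bar>R (apply_bcontfun w s)\<bar>" unfolding hw_def by simp
    also have "\<bar>\<mu> * g s\<bar> \<le> \<mu> * Gb" using mu g(2)[of s] by (simp add: abs_mult mult_left_mono)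
    also have "\<bar>R (apply_bcontfun w s)\<bar> \<le> L * \<epsilon>" by (rule Rb[OF wS[OF that]])
    finally show ?thesis by simp
  qed
  define T where "T = (\<lambda>w. Bcontfun (Sop l1 l2 (hw w)))"
  have Tin: "Sop l1 l2 (hw w) \<in> bcontfun" and Tb: "\<And>t. \<bar>Sop l1 l2 (hw w) t\<bar> \<le> \<epsilon>"
    if "w \<in> S" for w
  proof -
    note P = Sop_props[OF l1 l2 c gm hwc[OF that] hwb[OF that]]
    obtain w1 w2 where "\<forall>t. (Sop l1 l2 (hw w) has_real_derivative w1 t) (at t)"
      using P(2) by blast
    then have cont: "continuous_on UNIV (Sop l1 l2 (hw w))"
      by (intro continuous_on_vector_derivative)
         (auto simp: has_real_derivative_iff_has_vector_derivative intro: has_vector_derivative_at_within)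
    have "\<bar>Sop l1 l2 (hw w) t\<bar> \<le> (\<mu> * Gb + L * \<epsilon>) * M" for t
      using P(1)[of t] by (simp add: M_def)
    also have "(\<mu> * Gb + L * \<epsilon>) * M \<le> \<epsilon>"
    proof -
      have "L * \<epsilon> * M \<le> \<epsilon> / 2" using LM eps by (simp add: mult.commute mult.left_commute)
      then show ?thesis using muM by (simp add: algebra_simps)
    qed
    finally show "\<And>t. \<bar>Sop l1 l2 (hw w) t\<bar> \<le> \<epsilon>" .
    then show "Sop l1 l2 (hw w) \<in> bcontfun"
      using cont by (intro bcontfun_normI) auto
  qed
  have TS: "T ` S \<subseteq> S"
  proof
    fix v assume "v \<in> T ` S"
    then obtain w where w: "w \<in> S" "v = T w" by auto
    have "norm v \<le> \<epsilon>"
      unfolding w T_def using Tb[OF w(1)] Bcontfun_inverse[OF Tin[OF w(1)]]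
      by (intro norm_bound) simp
    then show "v \<in> S" by (simp add: S_def dist_norm)
  qed
  have lip: "dist (T x) (T y) \<le> 1/2 * dist x y" if "x \<in> S" "y \<in> S" for x y
  proof (rule dist_bound)
    fix t
    have "dist (apply_bcontfun (T x) t) (apply_bcontfun (T y) t) = \<bar>Sop l1 l2 (hw x) t - Sop l1 l2 (hw y) t\<bar>"
      unfolding T_def Bcontfun_inverse[OF Tin[OF that(1)]] Bcontfun_inverse[OF Tin[OF that(2)]]
      by (simp add: dist_real_def)
    also have "Sop l1 l2 (hw x) t - Sop l1 l2 (hw y) t = Sop l1 l2 (\<lambda>s. hw x s - hw y s) t"
      by (rule Sop_diff[OF l1 l2 hwc[OF that(1)] hwb[OF that(1)] hwc[OF that(2)] hwb[OF that(2)]])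
    also have "\<bar>\<dots>\<bar> \<le> (L * dist x y) * M"
    proof -
      have db: "\<bar>hw x s - hw y s\<bar> \<le> L * dist x y" for s
      proof -
        have "\<bar>hw x s - hw y s\<bar> = \<bar>R (apply_bcontfun x s) - R (apply_bcontfun y s)\<bar>"
          by (simp add: hw_def)
        also have "\<dots> \<le> L * \<bar>apply_bcontfun x s - apply_bcontfun y s\<bar>"
          by (rule RL[OF wS[OF that(1)] wS[OF that(2)]])
        also have "\<bar>apply_bcontfun x s - apply_bcontfun y s\<bar> \<le> dist x y"
          using dist_bounded[of x s y] by (simp add: dist_real_def)
        finally show ?thesis using L by (simp add: mult_left_mono)
      qed
      have dc: "continuous_on UNIV (\<lambda>s. hw x s - hw y s)"
        using hwc[OF that(1)] hwc[OF that(2)] by (intro continuous_intros)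
      show ?thesis using Sop_props(1)[OF l1 l2 c gm dc db, of t] by (simp add: M_def)
    qed
    also have "(L * dist x y) * M \<le> 1/2 * dist x y"
    proof -
      have "(L * M) * dist x y \<le> 1/2 * dist x y" by (rule mult_right_mono[OF LM]) simp
      then show ?thesis by (simp add: mult_ac)
    qed
    finally show "dist (apply_bcontfun (T x) t) (apply_bcontfun (T y) t) \<le> 1/2 * dist x y" .
  qed
  have "\<exists>!w\<in>S. T w = w"
    apply (rule Banach_fix[OF _ _ _ _ TS lip])
    using eps by (auto simp: S_def complete_eq_closed)
  then obtain w where w: "w \<in> S" "T w = w" by blast
  have fix': "apply_bcontfun w t = Sop l1 l2 (\<lambda>s. - \<mu> * g s - R (apply_bcontfun w s)) t" for t
  proof -
    have "apply_bcontfun (T w) t = Sop l1 l2 (hw w) t"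
      unfolding T_def by (subst Bcontfun_inverse[OF Tin[OF w(1)]]) (rule refl)
    then show ?thesis unfolding w(2) hw_def by simp
  qed
  have "continuous_on UNIV (apply_bcontfun w)" by simp
  then show ?thesis using wS[OF w(1)] fix' by blast
qed


lemma roots_exist:
  fixes c \<gamma> :: real assumes c: "c > 0" and g: "\<gamma> > 0"
  shows "\<exists>l1 l2. Re l1 < 0 \<and> Re l2 < 0 \<and> l1 + l2 = - of_real c \<and> l1 * l2 = of_real \<gamma>"
proof (cases "c^2 - 4*\<gamma> \<ge> 0")
  assume T: "c^2 - 4*\<gamma> \<ge> 0"
  define d where "d = sqrt (c^2 - 4*\<gamma>)"
  have d0: "d \<ge> 0" using T by (simp add: d_def)
  have dd: "d^2 = c^2 - 4*\<gamma>" using T by (simp add: d_def)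
  have "d^2 < c^2" using dd g by simp
  then have dc: "d < c" using d0 c by (smt (verit) power_mono)
  show ?thesis
  proof (intro exI conjI)
    show "Re (complex_of_real ((-c + d)/2)) < 0" using dc by simp
    show "Re (complex_of_real ((-c - d)/2)) < 0" using c d0 by simp
    show "complex_of_real ((-c + d)/2) + complex_of_real ((-c - d)/2) = - of_real c"
      by (simp add: field_simps)
    have "((-c + d)/2) * ((-c - d)/2) = \<gamma>"
      using dd by (simp add: field_simps power2_eq_square) 
    then show "complex_of_real ((-c + d)/2) * complex_of_real ((-c - d)/2) = of_real \<gamma>"
      by (metis of_real_mult)
  qed
next
  assume F: "\<not> c^2 - 4*\<gamma> \<ge> 0"
  define d where "d = sqrt (4*\<gamma> - c^2)"
  have dd: "d^2 = 4*\<gamma> - c^2" using F by (simp add: d_def)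
  show ?thesis
  proof (intro exI conjI)
    show "Re (Complex (-c/2) (d/2)) < 0" using c by simp
    show "Re (Complex (-c/2) (-d/2)) < 0" using c by simp
    show "Complex (-c/2) (d/2) + Complex (-c/2) (-d/2) = - of_real c"
      by (simp add: complex_eq_iff)
    show "Complex (-c/2) (d/2) * Complex (-c/2) (-d/2) = of_real \<gamma>"
      using dd by (simp add: complex_eq_iff field_simps power2_eq_square)
  qed
qed

lemma R_lip:
  fixes A p L :: real assumes A: "A > 0" and p: "p > 1" and L: "L > 0"
  shows "\<exists>\<epsilon>>0. \<epsilon> \<le> A/2 \<and> (\<forall>x y. \<bar>x\<bar> \<le> \<epsilon> \<longrightarrow> \<bar>y\<bar> \<le> \<epsilon> \<longrightarrow>
     \<bar>((A+x) powr p - A powr p - p * A powr (p-1) * x) - ((A+y) powr p - A powr p - p * A powr (p-1) * y)\<bar>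
       \<le> L * \<bar>x - y\<bar>)"
proof -
  define R where "R = (\<lambda>x. (A+x) powr p - A powr p - p * A powr (p-1) * x)"
  define R' where "R' = (\<lambda>x. p * (A+x) powr (p-1) - p * A powr (p-1))"
  have "isCont (\<lambda>x. (A+x) powr (p-1)) 0"
    using A by (intro continuous_intros) auto
  moreover have "L / p > 0" using L p by simp
  ultimately obtain \<delta> where \<delta>: "\<delta> > 0" "\<forall>y. dist y 0 < \<delta> \<longrightarrow> dist ((A+y) powr (p-1)) ((A+0) powr (p-1)) < L / p"
    unfolding continuous_at_eps_delta by blast
  define \<epsilon> where "\<epsilon> = min (\<delta>/2) (A/2)"
  have e: "\<epsilon> > 0" "\<epsilon> \<le> A/2" "\<epsilon> < \<delta>" using \<delta> A by (auto simp: \<epsilon>_def)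
  have der: "(R has_real_derivative R' x) (at x)" if "\<bar>x\<bar> \<le> \<epsilon>" for x
  proof -
    have "A + x > 0" using that e by linarith
    then show ?thesis unfolding R_def R'_def
      by (auto intro!: derivative_eq_intros)
  qed
  have R'b: "\<bar>R' x\<bar> \<le> L" if "\<bar>x\<bar> \<le> \<epsilon>" for x
  proof -
    have "\<bar>(A+x) powr (p-1) - A powr (p-1)\<bar> < L / p" using \<delta>(2)[rule_format, of x] that e by (simp add: dist_real_def)
    then have "p * \<bar>(A+x) powr (p-1) - A powr (p-1)\<bar> \<le> L" using p by (simp add: field_simps)
    then show ?thesis unfolding R'_def using p
      by (simp add: abs_mult right_diff_distrib[symmetric])
  qed
  have main: "\<bar>R x - R y\<bar> \<le> L * \<bar>x - y\<bar>" if xy: "\<bar>x\<bar> \<le> \<epsilon>" "\<bar>y\<bar> \<le> \<epsilon>" "x < y" for x y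
  proof -
    have "\<exists>z. x < z \<and> z < y \<and> R y - R x = (y - x) * R' z"
      apply (rule MVT2[OF xy(3)])
      using der xy by (simp add: abs_le_iff)
    then obtain z where z: "x < z" "z < y" "R y - R x = (y - x) * R' z" by blast
    have "\<bar>z\<bar> \<le> \<epsilon>" using z xy by (simp add: abs_le_iff)
    then have "\<bar>R y - R x\<bar> \<le> \<bar>y - x\<bar> * L" unfolding z(3) abs_mult
      using R'b by (intro mult_left_mono) auto
    then show ?thesis by (simp add: abs_minus_commute mult.commute)
  qed
  have "\<bar>R x - R y\<bar> \<le> L * \<bar>x - y\<bar>" if "\<bar>x\<bar> \<le> \<epsilon>" "\<bar>y\<bar> \<le> \<epsilon>" for x y
  proof (cases x y rule: linorder_cases)
    case less then show ?thesis using main that by blast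
  next
    case equal then show ?thesis by simp
  next
    case greater then show ?thesis using main[of y x] that by (simp add: abs_minus_commute)
  qed
  then show ?thesis using e unfolding R_def by blast
qed



lemma g_bound:
  fixes f :: "real \<Rightarrow> real" and m :: real
  assumes adm: "admissible_f N f" and m0: "m \<ge> 0" and mN: "m + 2 < real N"
  shows "\<exists>Gb\<ge>0. \<forall>r>0. \<bar>r powr (m+2) * f r\<bar> \<le> Gb"
proof -
  have fc: "continuous_on {0<..} f" and fpos: "\<And>r. r > 0 \<Longrightarrow> f r \<ge> 0"
    using adm by (auto simp: admissible_f_def)
  obtain \<nu> where nu: "\<nu> > -2" "f \<in> O[at_right 0](\<lambda>r. r powr \<nu>)"
    using adm by (auto simp: admissible_f_def)
  obtain q where q: "q > real N" "f \<in> O[at_top](\<lambda>r. r powr (- q))"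
    using adm by (auto simp: admissible_f_def)
  obtain C0 where C0: "C0 > 0" "eventually (\<lambda>r. norm (f r) \<le> C0 * norm (r powr \<nu>)) (at_right 0)"
    using nu(2) by (elim landau_o.bigE) auto
  obtain b where b: "b > 0" "\<And>r. r > 0 \<Longrightarrow> r < b \<Longrightarrow> norm (f r) \<le> C0 * norm (r powr \<nu>)"
    using C0(2) unfolding eventually_at_right_field by auto
  obtain C1 where C1: "C1 > 0" "eventually (\<lambda>r. norm (f r) \<le> C1 * norm (r powr (-q))) at_top"
    using q(2) by (elim landau_o.bigE) auto
  obtain K where K: "\<And>r. r \<ge> K \<Longrightarrow> norm (f r) \<le> C1 * norm (r powr (-q))"
    using C1(2) unfolding eventually_at_top_linorder by auto
  define \<delta> where "\<delta> = min b 1"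
  have \<delta>: "\<delta> > 0" "\<delta> \<le> 1" "\<delta> \<le> b" using b by (auto simp: \<delta>_def)
  define K' where "K' = max K 1"
  have K': "K' \<ge> 1" "K' \<ge> K" "K' \<ge> \<delta>" using \<delta> by (auto simp: K'_def)
  have cc: "continuous_on {\<delta>..K'} (\<lambda>r. r powr (m+2) * f r)"
    using \<delta> by (intro continuous_intros continuous_on_subset[OF fc]) auto
  obtain x0 where x0: "x0 \<in> {\<delta>..K'}" "\<And>y. y \<in> {\<delta>..K'} \<Longrightarrow> y powr (m+2) * f y \<le> x0 powr (m+2) * f x0"
    using continuous_attains_sup[OF compact_Icc _ cc] K' by auto
  define Gb where "Gb = max (x0 powr (m+2) * f x0) (max C0 C1)"
  have Gb0: "Gb \<ge> 0" using C0 by (simp add: Gb_def)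
  have "\<bar>r powr (m+2) * f r\<bar> \<le> Gb" if r: "r > 0" for r
  proof -
    have nn: "r powr (m+2) * f r \<ge> 0" using fpos[OF r] by simp
    consider "r < \<delta>" | "r \<in> {\<delta>..K'}" | "r > K'" by force
    then have "r powr (m+2) * f r \<le> Gb"
    proof cases
      case 1
      have "f r \<le> C0 * r powr \<nu>" using b(2)[OF r] 1 \<delta> fpos[OF r] by simp
      then have "r powr (m+2) * f r \<le> r powr (m+2) * (C0 * r powr \<nu>)"
        by (intro mult_left_mono) auto
      also have "\<dots> = C0 * r powr (m+2+\<nu>)" by (simp add: powr_add)
      also have "r powr (m+2+\<nu>) \<le> 1 powr (m+2+\<nu>)"
        using 1 \<delta> r m0 nu(1) by (intro powr_mono2) auto
      finally have "r powr (m+2) * f r \<le> C0" using C0 by simp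
      then show ?thesis by (simp add: Gb_def)
    next
      case 2
      then show ?thesis using x0(2)[OF 2] by (simp add: Gb_def)
    next
      case 3
      have "f r \<le> C1 * r powr (-q)" using K[of r] 3 K' fpos[OF r] by simp
      then have "r powr (m+2) * f r \<le> r powr (m+2) * (C1 * r powr (-q))"
        by (intro mult_left_mono) auto
      also have "\<dots> = C1 * r powr (m+2-q)" by (simp add: powr_add[symmetric])
      also have "r powr (m+2-q) \<le> r powr 0"
        using 3 K' q(1) mN by (intro powr_mono) auto
      finally have "r powr (m+2) * f r \<le> C1" using C1 r by simp
      then show ?thesis by (simp add: Gb_def)
    qed
    then show ?thesis using nn by simp
  qed
  then show ?thesis using Gb0 by blast
qed



lemma lim_top_powr:
  fixes a e :: real assumes a: "a > 0" and e: "e > 0"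
  shows "filterlim (\<lambda>r. a * r powr e) at_top at_top"
  unfolding filterlim_at_top
proof
  fix Z :: real
  define Y where "Y = max Z 1 / a"
  have Y: "Y > 0" using a by (simp add: Y_def)
  define R0 where "R0 = Y powr (1/e)"
  have "Z \<le> a * r powr e" if r: "r \<ge> R0" for r
  proof -
    have "Y = R0 powr e" using Y e by (simp add: R0_def powr_powr)
    also have "\<dots> \<le> r powr e" using r e by (intro powr_mono2) (auto simp: R0_def)
    finally have "a * Y \<le> a * r powr e" using a by simp
    moreover have "a * Y = max Z 1" using a by (simp add: Y_def)
    ultimately show ?thesis by simp
  qed
  then show "eventually (\<lambda>r. Z \<le> a * r powr e) at_top"
    unfolding eventually_at_top_linorder by blast
qed

lemma lim_right_powr:
  fixes a m :: real assumes a: "a > 0" and m: "m > 0"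
  shows "filterlim (\<lambda>r. a * r powr (-m)) at_top (at_right 0)"
  unfolding filterlim_at_top
proof
  fix Z :: real
  define Y where "Y = max Z 1 / a"
  have Y: "Y > 0" using a by (simp add: Y_def)
  define b where "b = Y powr (-1/m)"
  have b: "b > 0" using Y by (simp add: b_def)
  have "Z \<le> a * r powr (-m)" if r: "r > 0" "r < b" for r
  proof -
    have "Y = b powr (-m)" using Y m by (simp add: b_def powr_powr)
    also have "\<dots> \<le> r powr (-m)" using r m by (intro powr_mono2') auto
    finally have "a * Y \<le> a * r powr (-m)" using a by simp
    moreover have "a * Y = max Z 1" using a by (simp add: Y_def)
    ultimately show ?thesis by simp
  qed
  then show "eventually (\<lambda>r. Z \<le> a * r powr (-m)) (at_right 0)"
    unfolding eventually_at_right_field using b by blast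
qed

lemma limsup_inf:
  fixes F :: "real \<Rightarrow> real"
  assumes "filterlim F at_top at_top"
  shows "Limsup at_top (\<lambda>r. ereal (F r)) = \<infinity>"
  by (rule lim_imp_Limsup) (use assms in \<open>auto simp: tendsto_PInfty_eq_at_top\<close>)



lemma powr_m1: "r > 0 \<Longrightarrow> r powr (a - 1) = r powr a / r" for r a :: real
  by (simp add: powr_diff)

lemma assemble:
  fixes N :: nat and \<alpha> p m k A c \<gamma> \<mu> \<epsilon> :: real and f g w w1 w2 :: "real \<Rightarrow> real"
  assumes N: "N \<ge> 3" and p1: "p > 1" and m: "m > 0" and mp: "m * (p-1) = 2 + \<alpha>"
    and mN: "2*m < real N - 2"
    and k: "k = m * (real N - 2 - m)" and A: "A > 0" and Ak: "A powr (p-1) = k"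
    and c: "c = real N - 2 - 2*m" and \<gamma>: "\<gamma> = (p-1)*k" and eps: "\<epsilon> < A"
    and g: "\<And>t. g t = exp t powr (m+2) * f (exp t)"
    and wb: "\<And>t. \<bar>w t\<bar> \<le> \<epsilon>"
    and wc: "continuous_on UNIV w" and w1c: "continuous_on UNIV w1" and w2c: "continuous_on UNIV w2"
    and d1: "\<And>t. (w has_real_derivative w1 t) (at t)"
    and d2: "\<And>t. (w1 has_real_derivative w2 t) (at t)"
    and eq: "\<And>t. w2 t + c * w1 t + \<gamma> * w t = - \<mu> * g t - ((A + w t) powr p - A powr p - p * A powr (p-1) * w t)"
  shows "singular_solution N \<alpha> p \<mu> f (\<lambda>r. r powr (-m) * (A + w (ln r))) \<and>
         slow_decay N (\<lambda>r. r powr (-m) * (A + w (ln r)))"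
proof -
  define u where "u = (\<lambda>r. r powr (-m) * (A + w (ln r)))"
  define u' where "u' = (\<lambda>r. r powr (-m-1) * (- m * (A + w (ln r)) + w1 (ln r)))"
  define u'' where "u'' = (\<lambda>r. r powr (-m-2) * (m*(m+1) * (A + w (ln r)) - (2*m+1) * w1 (ln r) + w2 (ln r)))"
  have vpos: "A + w t \<ge> A - \<epsilon>" for t using wb[of t] by simp
  have Ae: "A - \<epsilon> > 0" using eps by simp
  have du: "(u has_real_derivative u' r) (at r)" if r: "r > 0" for r
  proof -
    have dv: "((\<lambda>r. A + w (ln r)) has_real_derivative w1 (ln r) * (1/r)) (at r)"
    proof -
      have "((\<lambda>x. w (ln x)) has_real_derivative w1 (ln r) * (1/r)) (at r)"
        by (rule DERIV_chain2[OF d1 DERIV_ln_divide[OF r]])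
      from DERIV_add[OF DERIV_const this, of A] show ?thesis by simp
    qed
    have dp: "((\<lambda>r. r powr (-m)) has_real_derivative (-m) * r powr (-m - 1)) (at r)"
      using r by (auto intro!: derivative_eq_intros)
    have "(u has_real_derivative ((-m) * r powr (-m - 1) * (A + w (ln r)) + w1 (ln r) * (1/r) * r powr (-m))) (at r)"
      unfolding u_def by (rule DERIV_mult[OF dp dv])
    moreover have "(-m) * r powr (-m - 1) * (A + w (ln r)) + w1 (ln r) * (1/r) * r powr (-m) = u' r"
      using r by (simp add: u'_def powr_m1 field_simps)
    ultimately show ?thesis by simp
  qed
  have du': "(u' has_real_derivative u'' r) (at r)" if r: "r > 0" for r
  proof -
    have dv: "((\<lambda>r. - m * (A + w (ln r)) + w1 (ln r)) has_real_derivative (- m * (w1 (ln r) * (1/r)) + w2 (ln r) * (1/r))) (at r)"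
      using r by (auto intro!: derivative_eq_intros DERIV_chain2[OF d1] DERIV_chain2[OF d2])
    have dp: "((\<lambda>r. r powr (-m-1)) has_real_derivative (-m-1) * r powr (-m - 1 - 1)) (at r)"
      using r by (auto intro!: derivative_eq_intros)
    have "(u' has_real_derivative ((-m-1) * r powr (-m - 1 - 1) * (- m * (A + w (ln r)) + w1 (ln r))
            + (- m * (w1 (ln r) * (1/r)) + w2 (ln r) * (1/r)) * r powr (-m-1))) (at r)"
      unfolding u'_def by (rule DERIV_mult[OF dp dv])
    moreover have "(-m-1) * r powr (-m - 1 - 1) * (- m * (A + w (ln r)) + w1 (ln r))
            + (- m * (w1 (ln r) * (1/r)) + w2 (ln r) * (1/r)) * r powr (-m-1) = u'' r"
    proof -
      have e1: "r powr (-m-1) = r powr (-m-2) * r"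
      proof -
        have "-m-1 = (-m-2) + 1" by simp
        then have "r powr (-m-1) = r powr ((-m-2) + 1)" by (rule arg_cong)
        also have "\<dots> = r powr (-m-2) * r" using r by (simp only: powr_add powr_one_gt_zero_iff) simp
        finally show ?thesis .
      qed
      have e2: "r powr (-m - 1 - 1) = r powr (-m-2)" by (simp add: algebra_simps)
      show ?thesis unfolding u''_def e1 e2 using r by (simp add: field_simps)
    qed
    ultimately show ?thesis by simp
  qed
  have lnc: "continuous_on {0<..} (ln::real\<Rightarrow>real)" by (auto intro!: continuous_intros)
  have cw: "continuous_on {0<..} (\<lambda>r. w (ln r))"
    by (rule continuous_on_compose2[OF wc lnc]) auto
  have cw1: "continuous_on {0<..} (\<lambda>r. w1 (ln r))"
    by (rule continuous_on_compose2[OF w1c lnc]) auto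
  have cw2: "continuous_on {0<..} (\<lambda>r. w2 (ln r))"
    by (rule continuous_on_compose2[OF w2c lnc]) auto
  have cu'': "continuous_on {0<..} u''"
    unfolding u''_def by (intro continuous_intros cw cw1 cw2) auto
  have upos: "u r > 0" if r: "r > 0" for r
    unfolding u_def using r vpos[of "ln r"] Ae by (intro mult_pos_pos) auto
  have ode: "u'' r + (real N - 1) / r * u' r + r powr \<alpha> * (u r) powr p + \<mu> * f r = 0" if r: "r > 0" for r
  proof -
    define t where "t = ln r"
    define V where "V = A + w t"
    define P where "P = r powr (-m-2)"
    have V0: "V > 0" using vpos[of t] Ae by (simp add: V_def)
    have e1: "r powr (-m-1) = P * r"
    proof -
      have "-m-1 = (-m-2) + 1" by simp
      then have "r powr (-m-1) = r powr ((-m-2) + 1)" by (rule arg_cong)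
      also have "\<dots> = r powr (-m-2) * r" using r by (simp only: powr_add powr_one_gt_zero_iff) simp
      finally show ?thesis by (simp add: P_def)
    qed
    have F1: "(real N - 1) / r * u' r = P * ((real N - 1) * (- m * V + w1 t))"
      using r by (simp add: u'_def e1 V_def t_def)
    have F2: "u'' r = P * (m*(m+1) * V - (2*m+1) * w1 t + w2 t)"
      by (simp add: u''_def P_def V_def t_def)
    have F3: "r powr \<alpha> * (u r) powr p = P * V powr p"
    proof -
      have "(u r) powr p = (r powr (-m)) powr p * V powr p"
        by (simp add: u_def V_def t_def powr_mult)
      also have "(r powr (-m)) powr p = r powr (-m * p)" by (simp add: powr_powr)
      finally have "r powr \<alpha> * (u r) powr p = (r powr \<alpha> * r powr (-m * p)) * V powr p" by simp
      also have "r powr \<alpha> * r powr (-m * p) = r powr (\<alpha> + (-m * p))" by (simp only: powr_add)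
      also have "\<alpha> + (-m * p) = -m-2" using mp by (simp add: algebra_simps)
      finally show ?thesis by (simp add: P_def)
    qed
    have F4: "\<mu> * f r = P * (\<mu> * g t)"
    proof -
      have "g t = r powr (m+2) * f r" using r by (simp add: g t_def)
      moreover have "P * r powr (m+2) = 1"
        using r by (simp add: P_def flip: powr_add)
      ultimately show ?thesis by (simp add: algebra_simps)
    qed
    have Apk: "A powr p = A * k"
    proof -
      have "p = 1 + (p - 1)" by simp
      then have "A powr p = A powr (1 + (p-1))" by (rule arg_cong)
      also have "\<dots> = A * A powr (p-1)" using A by (simp only: powr_add) simp
      finally show ?thesis using Ak by simp
    qed
    have E: "w2 t = - \<mu> * g t - (V powr p - A * k - p * k * w t) - c * w1 t - \<gamma> * w t"
      using eq[of t] Apk Ak by (simp add: V_def)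
    have B0: "m*(m+1) * V - (2*m+1) * w1 t + w2 t + (real N - 1) * (- m * V + w1 t) + V powr p + \<mu> * g t = 0"
      unfolding E by (simp add: V_def c k \<gamma> algebra_simps)
    have "u'' r + (real N - 1) / r * u' r + r powr \<alpha> * (u r) powr p + \<mu> * f r
      = P * (m*(m+1) * V - (2*m+1) * w1 t + w2 t + (real N - 1) * (- m * V + w1 t) + V powr p + \<mu> * g t)"
      unfolding F1 F2 F3 F4 by (simp add: algebra_simps)
    then show ?thesis using B0 by simp
  qed
  have lim0: "filterlim u at_top (at_right 0)"
  proof (rule filterlim_at_top_mono[OF lim_right_powr[OF Ae m]])
    show "eventually (\<lambda>r. (A - \<epsilon>) * r powr (-m) \<le> u r) (at_right 0)"
      unfolding eventually_at_right_field
    proof (intro exI[of _ 1] conjI allI impI)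
      fix r :: real assume "0 < r" "r < 1"
      then show "(A - \<epsilon>) * r powr (-m) \<le> u r"
        unfolding u_def using vpos[of "ln r"] by (simp add: mult.commute mult_left_mono)
    qed simp
  qed
  have sd: "slow_decay N u"
    unfolding slow_decay_def
  proof (rule limsup_inf, rule filterlim_at_top_mono[OF lim_top_powr[OF Ae, of "real N - 2 - m"]])
    show "real N - 2 - m > 0" using mN m by simp
    show "eventually (\<lambda>r. (A - \<epsilon>) * r powr (real N - 2 - m) \<le> r ^ (N - 2) * u r) at_top"
      unfolding eventually_at_top_linorder
    proof (intro exI[of _ 1] allI impI)
      fix r :: real assume r: "1 \<le> r"
      have rn: "r ^ (N - 2) = r powr (real N - 2)"
        using r N by (simp add: powr_realpow[symmetric] of_nat_diff)
      have "r ^ (N - 2) * u r = r powr (real N - 2 - m) * (A + w (ln r))"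
        unfolding rn u_def using r by (simp add: powr_diff powr_minus divide_inverse)
      also have "\<dots> \<ge> r powr (real N - 2 - m) * (A - \<epsilon>)"
        using vpos[of "ln r"] by (intro mult_left_mono) auto
      finally show "(A - \<epsilon>) * r powr (real N - 2 - m) \<le> r ^ (N - 2) * u r" by (simp add: mult.commute)
    qed
  qed
  have "singular_solution N \<alpha> p \<mu> f u"
    unfolding singular_solution_def
    using du du' cu'' upos ode lim0 by blast
  then show ?thesis using sd by (simp add: u_def)
qed



theorem corollary1p7:
  fixes N :: nat and \<alpha> p :: real and f :: "real \<Rightarrow> real"
  assumes "N \<ge> 3" and "\<alpha> > -2" and "p > p_S N \<alpha>" and "admissible_f N f"
  shows "\<exists>\<mu>\<^sub>1>0. \<forall>\<mu>. 0 \<le> \<mu> \<and> \<mu> < \<mu>\<^sub>1 \<longrightarrow>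
           (\<exists>u. singular_solution N \<alpha> p \<mu> f u \<and> slow_decay N u)"
proof -
  have N3: "real N \<ge> 3" using assms(1) by simp
  have hp: "p * (real N - 2) > real N + 2 + 2 * \<alpha>"
    using assms(3) N3 by (simp add: p_S_def pos_divide_less_eq)
  have p1: "p > 1"
  proof (rule ccontr)
    assume "\<not> p > 1"
    then have "p * (real N - 2) \<le> 1 * (real N - 2)" using N3 by (intro mult_right_mono) auto
    then show False using hp assms(2) by simp
  qed
  define m where "m = (2 + \<alpha>) / (p - 1)"
  have m: "m > 0" using p1 assms(2) by (simp add: m_def)
  have mp: "m * (p - 1) = 2 + \<alpha>" using p1 by (simp add: m_def)
  have mN: "2 * m < real N - 2"
  proof -
    have "2 * (m * (p - 1)) < (real N - 2) * (p - 1)"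
      unfolding mp using hp by (simp add: algebra_simps)
    then have "(2 * m) * (p - 1) < (real N - 2) * (p - 1)" by (simp add: algebra_simps)
    then show ?thesis using p1 by (simp add: mult_less_cancel_right)
  qed
  define k where "k = m * (real N - 2 - m)"
  have k: "k > 0" using m mN by (simp add: k_def)
  define A where "A = k powr (1 / (p - 1))"
  have A: "A > 0" using k by (simp add: A_def)
  have Ak: "A powr (p - 1) = k" using k p1 by (simp add: A_def powr_powr)
  define c where "c = real N - 2 - 2 * m"
  have c: "c > 0" using mN by (simp add: c_def)
  define \<gamma> where "\<gamma> = (p - 1) * k"
  have \<gamma>: "\<gamma> > 0" using p1 k by (simp add: \<gamma>_def)
  obtain l1 l2 where l: "Re l1 < 0" "Re l2 < 0" "l1 + l2 = - of_real c" "l1 * l2 = of_real \<gamma>"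
    using roots_exist[OF c \<gamma>] by blast
  define Mp where "Mp = Re l1 * Re l2"
  have Mp: "Mp > 0" using l by (simp add: Mp_def mult_neg_neg)
  define L where "L = Mp / 2"
  have L: "L > 0" using Mp by (simp add: L_def)
  obtain \<epsilon> where e: "\<epsilon> > 0" "\<epsilon> \<le> A/2"
    and lip: "\<And>x y. \<bar>x\<bar> \<le> \<epsilon> \<Longrightarrow> \<bar>y\<bar> \<le> \<epsilon> \<Longrightarrow>
     \<bar>((A+x) powr p - A powr p - p * A powr (p-1) * x) - ((A+y) powr p - A powr p - p * A powr (p-1) * y)\<bar>
       \<le> L * \<bar>x - y\<bar>"
    using R_lip[OF A p1 L] by blast
  have fc: "continuous_on {0<..} f" using assms(4) by (simp add: admissible_f_def)
  obtain Gb where Gb: "Gb \<ge> 0" "\<And>r. r > 0 \<Longrightarrow> \<bar>r powr (m+2) * f r\<bar> \<le> Gb"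
    using g_bound[OF assms(4), of m] m mN by auto
  define g where "g = (\<lambda>t. exp t powr (m+2) * f (exp t))"
  have gc: "continuous_on UNIV g"
  proof -
    have "continuous_on UNIV (\<lambda>t. f (exp t))"
      by (rule continuous_on_compose2[OF fc]) (auto intro!: continuous_intros)
    then show ?thesis unfolding g_def by (auto intro!: continuous_intros)
  qed
  have gb: "\<bar>g t\<bar> \<le> Gb" for t unfolding g_def using Gb(2)[of "exp t"] by simp
  define \<mu>1 where "\<mu>1 = \<epsilon> * Mp / (2 * (Gb + 1))"
  have \<mu>1: "\<mu>1 > 0" using e Mp Gb by (simp add: \<mu>1_def)
  have "\<exists>u. singular_solution N \<alpha> p \<mu> f u \<and> slow_decay N u" if mu: "0 \<le> \<mu>" "\<mu> < \<mu>1" for \<mu>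
  proof -
    define R where "R = (\<lambda>x. (A+x) powr p - A powr p - p * A powr (p-1) * x)"
    have Rc: "continuous_on {-\<epsilon>..\<epsilon>} R"
      unfolding R_def using e A by (intro continuous_intros) auto
    have R0: "R 0 = 0" by (simp add: R_def)
    have RL: "\<bar>R x - R y\<bar> \<le> L * \<bar>x - y\<bar>" if "\<bar>x\<bar> \<le> \<epsilon>" "\<bar>y\<bar> \<le> \<epsilon>" for x y
      unfolding R_def by (rule lip[OF that])
    have Lc: "L / (Re l1 * Re l2) \<le> 1/2" using Mp by (simp add: L_def Mp_def)
    have muc: "\<mu> * Gb / (Re l1 * Re l2) \<le> \<epsilon> / 2"
    proof -
      have "\<mu> * Gb \<le> \<mu> * (Gb + 1)" using mu by (intro mult_left_mono) auto
      also have "\<dots> \<le> \<mu>1 * (Gb + 1)" using mu Gb by (intro mult_right_mono) auto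
      also have "\<dots> = \<epsilon> * Mp / 2"
      proof -
        have "Gb + 1 \<noteq> 0" using Gb by simp
        then show ?thesis by (simp add: \<mu>1_def field_simps)
      qed
      finally show ?thesis using Mp by (simp add: Mp_def[symmetric] pos_divide_le_eq)
    qed
    obtain w where wc: "continuous_on UNIV w" and wb: "\<And>t. \<bar>w t\<bar> \<le> \<epsilon>"
      and wfix: "\<And>t. w t = Sop l1 l2 (\<lambda>s. - \<mu> * g s - R (w s)) t"
      using fixpoint[OF l(1,2,3,4) gc gb e(1) Rc R0 RL less_imp_le[OF L] Lc mu(1) muc] by blast
    define h where "h = (\<lambda>s. - \<mu> * g s - R (w s))"
    have hc: "continuous_on UNIV h"
    proof -
      have "continuous_on UNIV (\<lambda>s. R (w s))"
      proof (rule continuous_on_compose2[OF Rc wc])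
        show "range w \<subseteq> {-\<epsilon>..\<epsilon>}"
        proof
          fix y assume "y \<in> range w"
          then obtain s where "y = w s" by auto
          with wb[of s] show "y \<in> {-\<epsilon>..\<epsilon>}" by (simp add: abs_le_iff)
        qed
      qed
      then show ?thesis unfolding h_def using gc by (intro continuous_intros)
    qed
    have hb: "\<bar>h s\<bar> \<le> \<mu> * Gb + L * \<epsilon>" for s
    proof -
      have "\<bar>R (w s) - R 0\<bar> \<le> L * \<bar>w s - 0\<bar>" using RL[OF wb[of s], of 0] e by simp
      also have "\<dots> \<le> L * \<epsilon>" using wb[of s] L by (intro mult_left_mono) auto
      finally have r: "\<bar>R (w s)\<bar> \<le> L * \<epsilon>" using R0 by simp
      have "\<bar>\<mu> * g s\<bar> \<le> \<mu> * Gb" using mu gb[of s] by (simp add: abs_mult mult_left_mono)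
      then show ?thesis using r unfolding h_def by linarith
    qed
    have weq: "Sop l1 l2 h = w"
    proof (rule ext)
      fix t show "Sop l1 l2 h t = w t" unfolding h_def by (rule wfix[symmetric])
    qed
    obtain w1 w2 where w12: "continuous_on UNIV w1" "continuous_on UNIV w2"
      "\<And>t. (Sop l1 l2 h has_real_derivative w1 t) (at t)" "\<And>t. (w1 has_real_derivative w2 t) (at t)"
      "\<And>t. w2 t + c * w1 t + \<gamma> * Sop l1 l2 h t = h t"
      using Sop_props(2)[OF l(1,2,3,4) hc hb] by blast
    have eq: "w2 t + c * w1 t + \<gamma> * w t = - \<mu> * g t - ((A + w t) powr p - A powr p - p * A powr (p-1) * w t)" for t
      using w12(5)[of t] unfolding weq by (simp add: h_def R_def)
    have "singular_solution N \<alpha> p \<mu> f (\<lambda>r. r powr (-m) * (A + w (ln r))) \<and>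
         slow_decay N (\<lambda>r. r powr (-m) * (A + w (ln r)))"
    proof (rule assemble[OF assms(1) p1 m mp mN k_def A Ak c_def \<gamma>_def _ _ wb wc w12(1,2) _ w12(4) eq])
      show "\<epsilon> < A" using e A by simp
      show "\<And>t. g t = exp t powr (m + 2) * f (exp t)" by (simp add: g_def)
      show "\<And>t. (w has_real_derivative w1 t) (at t)" using w12(3) unfolding weq .
    qed
    then show ?thesis by blast
  qed
  then show ?thesis using \<mu>1 by blast
qed


end
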